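(* Let $N,\mu,\beta,\sigma,\gamma,p>0$ and $0<\rho<1$ and consider the system $$S'=\mu N-\tfrac{\beta(1-\rho)}{N}SI-\tfrac{p}{N}S-\mu S,\qquad E'=\tfrac{\beta(1-\rho)}{N}SI-(\sigma+\mu)E,\qquad I'=\sigma E-(\gamma+\mu)I$$ on $\Omega=\{(S,E,I)\in\mathbb{R}_+^3: S+E+I\le N\}$. Let $\mathcal{R}_0=\dfrac{\mu N\sigma\beta(1-\rho)}{(\sigma+\mu)(\gamma+\mu)(p+\mu N)}$. If $\mathcal{R}_0>1$, then the disease-free equilibrium $\left(\frac{\mu N^2}{p+\mu N},0,0\right)$ is not an $\omega$-limit point of any orbit starting in the interior of $\Omega$.
   Context: $(S,E,I)$-subsystem of an SEIR model with vaccination rate $p$ and birth/death rate $\mu$. The $\omega$-limit set of a solution $x(\cdot)$ is $\{y:\exists t_n\to+\infty,\ x(t_n)\to y\}$. *)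

theory Defs
  imports "HOL-Analysis.Analysis"
begin

definition omega_limit :: "(real \<Rightarrow> 'a::topological_space) \<Rightarrow> 'a set" where
  "omega_limit x = {y. \<exists>t::nat \<Rightarrow> real. filterlim t at_top sequentially \<and> (\<lambda>n. x (t n)) \<longlonglongrightarrow> y}"

definition seir_field :: "real \<Rightarrow> real \<Rightarrow> real \<Rightarrow> real \<Rightarrow> real \<Rightarrow> real \<Rightarrow> real \<Rightarrow>
    real \<times> real \<times> real \<Rightarrow> real \<times> real \<times> real" where
  "seir_field N \<mu> \<beta> \<sigma> \<gamma> p \<rho> = (\<lambda>(S, E, I).
     (\<mu> * N - \<beta> * (1 - \<rho>) / N * S * I - p / N * S - \<mu> * S,
      \<beta> * (1 - \<rho>) / N * S * I - (\<sigma> + \<mu>) * E,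
      \<sigma> * E - (\<gamma> + \<mu>) * I))"

definition Omega :: "real \<Rightarrow> (real \<times> real \<times> real) set" where
  "Omega N = {(S, E, I). 0 \<le> S \<and> 0 \<le> E \<and> 0 \<le> I \<and> S + E + I \<le> N}"

definition R0 :: "real \<Rightarrow> real \<Rightarrow> real \<Rightarrow> real \<Rightarrow> real \<Rightarrow> real \<Rightarrow> real \<Rightarrow> real" where
  "R0 N \<mu> \<beta> \<sigma> \<gamma> p \<rho> =
     \<mu> * N * \<sigma> * \<beta> * (1 - \<rho>) / ((\<sigma> + \<mu>) * (\<gamma> + \<mu>) * (p + \<mu> * N))"

end

theory Submission
  imports Defs
begin

lemma comp_deriv:
  fixes x :: "real \<Rightarrow> real \<times> real \<times> real"
  assumes "(x has_vector_derivative (a,b,c)) (at t)"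
  shows "((\<lambda>t. fst (x t)) has_real_derivative a) (at t)"
    "((\<lambda>t. fst (snd (x t))) has_real_derivative b) (at t)"
    "((\<lambda>t. snd (snd (x t))) has_real_derivative c) (at t)"
proof -
  have d: "(x has_derivative (\<lambda>h. h *\<^sub>R (a,b,c))) (at t)"
    using assms by (simp add: has_vector_derivative_def)
  have "((\<lambda>t. fst (x t)) has_derivative (\<lambda>h. fst (h *\<^sub>R (a,b,c)))) (at t)"
    by (rule has_derivative_fst[OF d])
  then show "((\<lambda>t. fst (x t)) has_real_derivative a) (at t)"
    by (simp add: has_field_derivative_def mult.commute[of _ a] mult.commute[of _ b] mult.commute[of _ c])
  have "((\<lambda>t. fst (snd (x t))) has_derivative (\<lambda>h. fst (snd (h *\<^sub>R (a,b,c))))) (at t)"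
    by (rule has_derivative_fst[OF has_derivative_snd[OF d]])
  then show "((\<lambda>t. fst (snd (x t))) has_real_derivative b) (at t)"
    by (simp add: has_field_derivative_def mult.commute[of _ a] mult.commute[of _ b] mult.commute[of _ c])
  have "((\<lambda>t. snd (snd (x t))) has_derivative (\<lambda>h. snd (snd (h *\<^sub>R (a,b,c))))) (at t)"
    by (rule has_derivative_snd[OF has_derivative_snd[OF d]])
  then show "((\<lambda>t. snd (snd (x t))) has_real_derivative c) (at t)"
    by (simp add: has_field_derivative_def mult.commute[of _ a] mult.commute[of _ b] mult.commute[of _ c])
qed

lemma maxsq_deriv: "((\<lambda>z::real. (max 0 z)^2) has_real_derivative 2 * max 0 y) (at y)"
proof -
  consider "y > 0" | "y < 0" | "y = 0" by linarith
  then show ?thesis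
  proof cases
    case 1
    have "((\<lambda>z::real. z^2) has_real_derivative 2 * max 0 y) (at y)"
      using 1 by (auto intro!: derivative_eq_intros)
    then show ?thesis
      by (rule has_field_derivative_transform_within_open[where S="{0<..}"]) (use 1 in auto)
  next
    case 2
    have "((\<lambda>z::real. 0) has_real_derivative 2 * max 0 y) (at y)"
      using 2 by (auto intro!: derivative_eq_intros)
    then show ?thesis
      by (rule has_field_derivative_transform_within_open[where S="{..<0}"]) (use 2 in auto)
  next
    case 3
    have "((\<lambda>z. ((max 0 z)^2 - (max 0 0)^2) / (z - 0)) \<longlongrightarrow> (0::real)) (at 0)"
    proof (rule Lim_null_comparison[where g="\<lambda>z. \<bar>z\<bar>"])
      show "\<forall>\<^sub>F z in at 0. norm (((max 0 z)^2 - (max 0 0)^2) / (z - 0)) \<le> \<bar>z\<bar>"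
        by (rule always_eventually) (auto simp: power2_eq_square abs_mult divide_simps max_def)
      show "((\<lambda>z::real. \<bar>z\<bar>) \<longlongrightarrow> 0) (at 0)"
        using tendsto_rabs[OF tendsto_ident_at[of 0 UNIV]] by simp
    qed
    then show ?thesis using 3 by (simp add: DERIV_def)
  qed
qed
lemma key_ineq:
  fixes c w k2 m Ss S1 b \<eta> A \<epsilon> sv ev iv :: real
  assumes "c > 0" "w > 0" "k2 > 0" "m > 0" "S1 = w*k2/c" "S1 < b" "b < Ss"
    "\<eta> = m*(Ss-b)/2" "A = k2/(2*(b-S1)*\<eta>)" "\<epsilon> = w*\<eta>/(c*b)"
    "sv > 0" "ev > 0" "iv > 0" "ev + w*iv < \<epsilon>"
  shows "c* sv*iv - w*k2*iv + (ev + w*iv) * (A * (2 * max 0 (b - sv)) * (m*Ss - c* sv*iv - m* sv)) \<ge> 0"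
proof -
  have S1pos: "S1 > 0" using assms by simp
  have bpos: "b > 0" using S1pos assms by linarith
  have etapos: "\<eta> > 0" unfolding assms(8) using assms(4,7) by simp
  have Apos: "A > 0" unfolding assms(9) using assms(3,6) etapos by simp
  have ilt: "w*iv < \<epsilon>" using assms by linarith
  have "c*b*(w*iv) < c*b*\<epsilon>" using ilt assms(1) bpos by simp
  also have "c*b*\<epsilon> = w*\<eta>" using assms bpos by (simp add: field_simps)
  finally have "w*(c*b*iv) < w*\<eta>" by (simp add: algebra_simps)
  then have cbi: "c*b*iv < \<eta>" using assms(2) by simp
  show ?thesis
  proof (cases "sv \<ge> b")
    case True
    then have "max 0 (b - sv) = 0" by simp
    moreover have "c* sv*iv - w*k2*iv \<ge> 0"
    proof -
      have "c* sv*iv - w*k2*iv = c*iv*(sv - S1)" using assms by (simp add: field_simps)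
      moreover have "sv - S1 \<ge> 0" using True assms by linarith
      ultimately show ?thesis using assms by simp
    qed
    ultimately show ?thesis by simp
  next
    case False
    have "c* sv*iv \<le> c*b*iv" using False assms by (simp add: mult_right_mono)
    moreover have "m* sv \<le> m*b" using False assms(4) by simp
    moreover have "m*Ss - m*b = 2*\<eta>" using assms(8) by (simp add: algebra_simps)
    ultimately have Sd: "m*Ss - c* sv*iv - m* sv \<ge> \<eta>"
      using cbi by linarith
    have mx: "max 0 (b - sv) = b - sv" using False by simp
    show ?thesis
    proof (cases "sv \<ge> S1")
      case True
      have "c* sv*iv - w*k2*iv = c*iv*(sv - S1)" using assms by (simp add: field_simps)
      moreover have "sv - S1 \<ge> 0" using True assms by linarith
      ultimately have "c* sv*iv - w*k2*iv \<ge> 0" using assms by simp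
      moreover have "(ev + w*iv) * (A * (2 * max 0 (b - sv)) * (m*Ss - c* sv*iv - m* sv)) \<ge> 0"
      proof -
        have "ev + w*iv \<ge> 0" "A * (2 * max 0 (b - sv)) \<ge> 0" "m*Ss - c* sv*iv - m* sv \<ge> 0"
          using mx False Sd etapos Apos assms(2,12,13) by auto
        then show ?thesis by simp
      qed
      ultimately show ?thesis by linarith
    next
      case lt: False
      have "c* sv*iv - w*k2*iv \<ge> - (w*k2*iv)" using assms by simp
      also have "- (w*k2*iv) \<ge> - (k2*(ev+w*iv))" using assms by (simp add: algebra_simps)
      finally have U1: "c* sv*iv - w*k2*iv \<ge> - (k2*(ev+w*iv))" .
      have "A * (2 * max 0 (b - sv)) * (m*Ss - c* sv*iv - m* sv) \<ge> A * (2*(b - S1)) * \<eta>"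
      proof -
        have h1: "2*(b - S1) \<le> 2 * max 0 (b - sv)" using mx lt by simp
        have h2: "0 \<le> 2*(b - S1)" using assms(6) by simp
        have "(2*(b - S1)) * \<eta> \<le> (2 * max 0 (b - sv)) * (m*Ss - c* sv*iv - m* sv)"
          by (rule mult_mono[OF h1 Sd]) (use h2 etapos in auto)
        then show ?thesis using Apos by (simp add: mult.assoc)
      qed
      also have "A * (2*(b - S1)) * \<eta> = k2" using assms etapos by (simp add: field_simps)
      finally have X: "k2 \<le> A * (2 * max 0 (b - sv)) * (m*Ss - c* sv*iv - m* sv)" .
      have "(ev+w*iv)*k2 \<le> (ev + w*iv) * (A * (2 * max 0 (b - sv)) * (m*Ss - c* sv*iv - m* sv))"
        by (rule mult_left_mono[OF X]) (use assms(2,12,13) in auto)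
      then show ?thesis using U1 by (simp add: algebra_simps)
    qed
  qed
qed
lemma interior_Omega_pos:
  assumes "(a, b, c) \<in> interior (Omega N)"
  shows "a > 0 \<and> b > 0 \<and> c > 0"
proof -
  have nn: "a \<ge> 0" "b \<ge> 0" "c \<ge> 0" using interior_subset[of "Omega N"] assms
    by (auto simp: Omega_def)
  obtain e where e: "e > 0" "ball (a,b,c) e \<subseteq> Omega N" using assms mem_interior by blast
  have "(a - e/2, b, c) \<in> ball (a,b,c) e" "(a, b - e/2, c) \<in> ball (a,b,c) e"
    "(a, b, c - e/2) \<in> ball (a,b,c) e"
    using e by (auto simp: dist_Pair_Pair dist_real_def)
  then have "(a - e/2, b, c) \<in> Omega N" "(a, b - e/2, c) \<in> Omega N" "(a, b, c - e/2) \<in> Omega N"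
    using e by auto
  then have "a - e/2 \<ge> 0" "b - e/2 \<ge> 0" "c - e/2 \<ge> 0" by (auto simp: Omega_def)
  then show ?thesis using e by auto
qed

theorem mainTheorem9:
  fixes N \<mu> \<beta> \<sigma> \<gamma> p \<rho> :: real
    and x :: "real \<Rightarrow> real \<times> real \<times> real"
  assumes "N > 0" "\<mu> > 0" "\<beta> > 0" "\<sigma> > 0" "\<gamma> > 0" "p > 0"
    and "0 < \<rho>" "\<rho> < 1"
    and "R0 N \<mu> \<beta> \<sigma> \<gamma> p \<rho> > 1"
    and "\<And>t. t \<ge> 0 \<Longrightarrow>
           (x has_vector_derivative seir_field N \<mu> \<beta> \<sigma> \<gamma> p \<rho> (x t)) (at t within {0..})"
    and "x 0 \<in> interior (Omega N)"
  shows "(\<mu> * N\<^sup>2 / (p + \<mu> * N), 0, 0) \<notin> omega_limit x"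
proof
  assume om: "(\<mu> * N\<^sup>2 / (p + \<mu> * N), 0, 0) \<in> omega_limit x"
  define S where "S = (\<lambda>t. fst (x t))"
  define E where "E = (\<lambda>t. fst (snd (x t)))"
  define I where "I = (\<lambda>t. snd (snd (x t)))"
  have xt: "x t = (S t, E t, I t)" for t by (simp add: S_def E_def I_def)
  define c where "c = \<beta> * (1 - \<rho>) / N"
  define k1 where "k1 = \<sigma> + \<mu>"
  define k2 where "k2 = \<gamma> + \<mu>"
  define m where "m = p / N + \<mu>"
  define w where "w = k1 / \<sigma>"
  have cpos: "c > 0" using assms(1-8) unfolding c_def by simp
  have k1pos: "k1 > 0" using assms(1-8) unfolding k1_def by simp
  have k2pos: "k2 > 0" using assms(1-8) unfolding k2_def by simp
  have mpos: "m > 0" using assms(1-8) unfolding m_def by (simp add: add_pos_pos)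
  have wpos: "w > 0" using assms k1pos unfolding w_def by simp
  have deriv: "(S has_real_derivative (\<mu> * N - c * S t * I t - p / N * S t - \<mu> * S t)) (at t) \<and>
      (E has_real_derivative (c * S t * I t - k1 * E t)) (at t) \<and>
      (I has_real_derivative (\<sigma> * E t - k2 * I t)) (at t)" if tpos: "t > 0" for t
  proof -
    have "at t within {0..} = at t" by (rule at_within_interior) (use tpos in simp)
    then have "(x has_vector_derivative (\<mu> * N - c * S t * I t - p / N * S t - \<mu> * S t,
         c * S t * I t - k1 * E t, \<sigma> * E t - k2 * I t)) (at t)"
      using assms(10)[of t] tpos by (simp add: seir_field_def xt c_def k1_def k2_def)
    note cd = comp_deriv[OF this, folded S_def E_def I_def]
    show ?thesis using cd by blast
  qed
  have contx: "continuous_on {0..} x"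
    using continuous_on_eq_continuous_within has_vector_derivative_continuous assms(10) by fastforce
  have contS: "continuous_on {0..} S" unfolding S_def by (intro continuous_intros contx)
  have contE: "continuous_on {0..} E" unfolding E_def by (intro continuous_intros contx)
  have contI: "continuous_on {0..} I" unfolding I_def by (intro continuous_intros contx)
  have x0: "S 0 > 0 \<and> E 0 > 0 \<and> I 0 > 0"
    using interior_Omega_pos[of "S 0" "E 0" "I 0" N] assms(11) xt[of 0] by simp
  have pos: "\<forall>t\<ge>0. S t > 0 \<and> E t > 0 \<and> I t > 0"
  proof (rule ccontr)
    assume nall: "\<not> (\<forall>t\<ge>0. S t > 0 \<and> E t > 0 \<and> I t > 0)"
    define g where "g t = min (S t) (min (E t) (I t))" for t
    define Z where "Z = {0..} \<inter> g -` {..0}"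
    have contg: "continuous_on {0..} g" unfolding g_def by (intro continuous_intros contS contE contI)
    have clZ: "closed Z" unfolding Z_def by (rule continuous_closed_preimage[OF contg]) auto
    have Zne: "Z \<noteq> {}" using nall by (auto simp: Z_def g_def min_le_iff_disj)
    have bddZ: "bdd_below Z" unfolding Z_def by (rule bdd_belowI[of _ 0]) auto
    define t0 where "t0 = Inf Z"
    have t0Z: "t0 \<in> Z" unfolding t0_def using closed_contains_Inf[OF Zne bddZ clZ] .
    have before: "S \<tau> > 0 \<and> E \<tau> > 0 \<and> I \<tau> > 0" if "0 \<le> \<tau>" "\<tau> < t0" for \<tau>
    proof (rule ccontr)
      assume "\<not> (S \<tau> > 0 \<and> E \<tau> > 0 \<and> I \<tau> > 0)"
      then have "\<tau> \<in> Z" using that by (auto simp: Z_def g_def min_le_iff_disj)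
      then have "t0 \<le> \<tau>" unfolding t0_def by (rule cInf_lower[OF _ bddZ])
      then show False using that by simp
    qed
    have g0: "g 0 > 0" using x0 by (simp add: g_def)
    have gt0: "g t0 \<le> 0" "t0 \<ge> 0" using t0Z by (auto simp: Z_def)
    have t0pos: "t0 > 0" using g0 gt0 by (cases "t0 = 0") auto
    have clos: "closure {0..<t0} = {0..t0}" using t0pos by simp
    have sub: "{0..t0} \<subseteq> {0..}" by auto
    have nnS: "S t0 \<ge> 0"
      by (rule continuous_ge_on_closure[of "{0..<t0}" S t0 0])
        (use clos continuous_on_subset[OF contS sub] before t0pos in \<open>auto simp: less_imp_le\<close>)
    have nnE: "E t0 \<ge> 0"
      by (rule continuous_ge_on_closure[of "{0..<t0}" E t0 0])
        (use clos continuous_on_subset[OF contE sub] before t0pos in \<open>auto simp: less_imp_le\<close>)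
    have nnI: "I t0 \<ge> 0"
      by (rule continuous_ge_on_closure[of "{0..<t0}" I t0 0])
        (use clos continuous_on_subset[OF contI sub] before t0pos in \<open>auto simp: less_imp_le\<close>)
    consider "S t0 \<le> 0" | "E t0 \<le> 0" | "I t0 \<le> 0"
      using gt0 by (auto simp: g_def min_le_iff_disj)
    then show False
    proof cases
      case 1
      then have S0: "S t0 = 0" using nnS by simp
      have "(S has_real_derivative (\<mu> * N)) (at t0)"
        using conjunct1[OF deriv[OF t0pos]] S0 by simp
      then obtain d where d: "d > 0" "\<forall>h>0. h < d \<longrightarrow> S (t0 - h) < S t0"
        using DERIV_pos_inc_left assms(1,2) by (metis mult_pos_pos)
      define h where "h = min (d/2) (t0/2)"
      have "h > 0" "h < d" "h < t0" using d t0pos by (auto simp: h_def)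
      then have "S (t0 - h) < 0" using d S0 by auto
      moreover have "S (t0 - h) > 0" using before[of "t0 - h"] \<open>h > 0\<close> \<open>h < t0\<close> by simp
      ultimately show False by simp
    next
      case 2
      define f where "f \<tau> = E \<tau> * exp (k1 * \<tau>)" for \<tau>
      have "f 0 \<le> f t0"
      proof (rule DERIV_nonneg_imp_increasing_open[of 0 t0 f])
        show "0 \<le> t0" using t0pos by simp
        show "\<exists>y. (f has_real_derivative y) (at \<tau>) \<and> 0 \<le> y" if "0 < \<tau>" "\<tau> < t0" for \<tau>
        proof -
          have dE: "(E has_real_derivative (c * S \<tau> * I \<tau> - k1 * E \<tau>)) (at \<tau>)"
            using deriv[of \<tau>] that by simp
          have "(f has_real_derivative (c * S \<tau> * I \<tau> * exp (k1 * \<tau>))) (at \<tau>)"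
            unfolding f_def[abs_def]
            by (rule derivative_eq_intros dE refl | simp add: algebra_simps)+
          moreover have "c * S \<tau> * I \<tau> * exp (k1 * \<tau>) \<ge> 0"
            using before[of \<tau>] that cpos by simp
          ultimately show ?thesis by blast
        qed
        show "continuous_on {0..t0} f" unfolding f_def[abs_def]
          by (intro continuous_intros continuous_on_subset[OF contE sub])
      qed
      moreover have "f t0 \<le> 0" using 2 by (simp add: f_def mult_nonpos_nonneg)
      moreover have "f 0 > 0" using x0 by (simp add: f_def)
      ultimately show False by simp
    next
      case 3
      define f where "f \<tau> = I \<tau> * exp (k2 * \<tau>)" for \<tau>
      have "f 0 \<le> f t0"
      proof (rule DERIV_nonneg_imp_increasing_open[of 0 t0 f])
        show "0 \<le> t0" using t0pos by simp
        show "\<exists>y. (f has_real_derivative y) (at \<tau>) \<and> 0 \<le> y" if "0 < \<tau>" "\<tau> < t0" for \<tau>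
        proof -
          have dI: "(I has_real_derivative (\<sigma> * E \<tau> - k2 * I \<tau>)) (at \<tau>)"
            using deriv[of \<tau>] that by simp
          have "(f has_real_derivative (\<sigma> * E \<tau> * exp (k2 * \<tau>))) (at \<tau>)"
            unfolding f_def[abs_def]
            by (rule derivative_eq_intros dI refl | simp add: algebra_simps)+
          moreover have "\<sigma> * E \<tau> * exp (k2 * \<tau>) \<ge> 0"
            using before[of \<tau>] that assms(4) by simp
          ultimately show ?thesis by blast
        qed
        show "continuous_on {0..t0} f" unfolding f_def[abs_def]
          by (intro continuous_intros continuous_on_subset[OF contI sub])
      qed
      moreover have "f t0 \<le> 0" using 3 by (simp add: f_def mult_nonpos_nonneg)
      moreover have "f 0 > 0" using x0 by (simp add: f_def)
      ultimately show False by simp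
    qed
  qed
  define Ss where "Ss = \<mu> * N / m"
  define S1 where "S1 = w * k2 / c"
  define b where "b = (S1 + Ss) / 2"
  define \<eta> where "\<eta> = m * (Ss - b) / 2"
  define A where "A = k2 / (2 * (b - S1) * \<eta>)"
  define \<epsilon> where "\<epsilon> = w * \<eta> / (c * b)"
  have DFE: "\<mu> * N\<^sup>2 / (p + \<mu> * N) = Ss"
    unfolding Ss_def m_def using assms(1,2,6) by (simp add: field_simps power2_eq_square)
  have R: "k1 * k2 * (p + \<mu> * N) < \<mu> * N * \<sigma> * \<beta> * (1 - \<rho>)"
  proof -
    have pos: "(\<sigma> + \<mu>) * (\<gamma> + \<mu>) * (p + \<mu> * N) > 0" using assms(1-6) by (simp add: add_pos_pos)
    have "1 < \<mu> * N * \<sigma> * \<beta> * (1 - \<rho>) / ((\<sigma> + \<mu>) * (\<gamma> + \<mu>) * (p + \<mu> * N))"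
      using assms(9) by (simp add: R0_def)
    then show ?thesis using pos by (simp add: less_divide_eq k1_def k2_def)
  qed
  have S1Ss: "S1 < Ss"
  proof -
    have e1: "S1 = k1 * k2 * N / (\<sigma> * \<beta> * (1 - \<rho>))"
      unfolding S1_def w_def c_def using assms(1-8) by (simp add: field_simps)
    have e2: "Ss = \<mu> * N * N / (p + \<mu> * N)"
      unfolding Ss_def m_def using assms(1,2,6) by (simp add: field_simps)
    have d1: "\<sigma> * \<beta> * (1 - \<rho>) > 0" using assms(1-8) by simp
    have d2: "p + \<mu> * N > 0" using assms(1-8) by (simp add: add_pos_pos)
    have "k1 * k2 * N * (p + \<mu> * N) < \<mu> * N * N * (\<sigma> * \<beta> * (1 - \<rho>))"
      using mult_strict_left_mono[OF R assms(1)] by (simp add: algebra_simps)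
    then show ?thesis unfolding e1 e2 using d1 d2 by (simp add: divide_less_eq less_divide_eq field_simps)
  qed
  have S1pos: "S1 > 0" unfolding S1_def using wpos k2pos cpos by simp
  have bS1: "S1 < b" "b < Ss" using S1Ss unfolding b_def by auto
  have bpos: "b > 0" using S1pos bS1 by simp
  have etapos: "\<eta> > 0" unfolding \<eta>_def using mpos bS1 by simp
  have Apos: "A > 0" unfolding A_def using k2pos bS1 etapos by simp
  have epspos: "\<epsilon> > 0" unfolding \<epsilon>_def using wpos etapos cpos bpos by simp
  define U where "U t = E t + w * I t" for t
  define q where "q t = (max 0 (b - S t))\<^sup>2" for t
  define \<Psi> where "\<Psi> t = U t * exp (- (A * q t))" for t
  have Upos: "t \<ge> 0 \<Longrightarrow> U t > 0" for t using pos wpos by (simp add: U_def add_pos_pos)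
  have contPsi: "continuous_on {0..} \<Psi>" unfolding \<Psi>_def[abs_def] U_def[abs_def] q_def[abs_def]
    by (intro continuous_intros contS contE contI)
  have qb: "q t \<le> b\<^sup>2" if "t \<ge> 0" for t
  proof -
    have "max 0 (b - S t) \<le> b" "0 \<le> max 0 (b - S t)" using pos that bpos by auto
    then show ?thesis unfolding q_def by (rule power_mono)
  qed
  have Psi_le_U: "\<Psi> t \<le> U t" if "t \<ge> 0" for t
  proof -
    have "exp (- (A * q t)) \<le> 1" using Apos by (simp add: q_def)
    then show ?thesis unfolding \<Psi>_def using Upos[OF that] by (simp add: mult_left_le)
  qed
  have U_le_Psi: "U t * exp (- (A * b\<^sup>2)) \<le> \<Psi> t" if "t \<ge> 0" for t
  proof -
    have "exp (- (A * b\<^sup>2)) \<le> exp (- (A * q t))" using qb[OF that] Apos by simp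
    then show ?thesis unfolding \<Psi>_def using Upos[OF that] by (simp add: mult_left_mono)
  qed
  have dPsi: "\<exists>y. (\<Psi> has_real_derivative y) (at t) \<and> 0 \<le> y" if tpos: "t > 0" and Ue: "U t < \<epsilon>" for t
  proof -
    define Sd where "Sd = \<mu> * N - c * S t * I t - p / N * S t - \<mu> * S t"
    define Ed where "Ed = c * S t * I t - k1 * E t"
    define Id where "Id = \<sigma> * E t - k2 * I t"
    have dS: "(S has_real_derivative Sd) (at t)" and dE: "(E has_real_derivative Ed) (at t)"
      and dI: "(I has_real_derivative Id) (at t)" using deriv[OF tpos] by (auto simp: Sd_def Ed_def Id_def)
    have dU: "(U has_real_derivative (Ed + w * Id)) (at t)" unfolding U_def[abs_def]
      by (rule derivative_eq_intros dE dI refl | simp)+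
    have dg: "((\<lambda>t. b - S t) has_real_derivative (- Sd)) (at t)"
      by (rule derivative_eq_intros dS refl | simp)+
    have dq: "(q has_real_derivative (2 * max 0 (b - S t) * (- Sd))) (at t)"
      unfolding q_def[abs_def] using DERIV_chain2[OF maxsq_deriv dg] by simp
    have dP: "(\<Psi> has_real_derivative
        (exp (- (A * q t)) * ((Ed + w * Id) + U t * (A * (2 * max 0 (b - S t)) * Sd)))) (at t)"
      unfolding \<Psi>_def[abs_def]
      by (rule derivative_eq_intros dU dq refl | simp add: algebra_simps)+
    have eq1: "Ed + w * Id = c * S t * I t - w * k2 * I t"
      unfolding Ed_def Id_def w_def using assms(4) by (simp add: field_simps)
    have eq2: "Sd = m * Ss - c * S t * I t - m * S t"
    proof -
      have "m * Ss = \<mu> * N" unfolding Ss_def using mpos by simp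
      moreover have "p / N * S t + \<mu> * S t = m * S t" unfolding m_def by (simp add: algebra_simps)
      ultimately show ?thesis unfolding Sd_def by linarith
    qed
    have "c * S t * I t - w * k2 * I t + (E t + w * I t) * (A * (2 * max 0 (b - S t)) * (m * Ss - c * S t * I t - m * S t)) \<ge> 0"
      by (rule key_ineq[OF cpos wpos k2pos mpos S1_def bS1 \<eta>_def A_def \<epsilon>_def])
        (use pos tpos Ue in \<open>auto simp: U_def\<close>)
    then have "(Ed + w * Id) + U t * (A * (2 * max 0 (b - S t)) * Sd) \<ge> 0"
      using eq1 eq2 by (simp add: U_def)
    then show ?thesis using dP by (intro exI[of _ "exp (- (A * q t)) * ((Ed + w * Id) + U t * (A * (2 * max 0 (b - S t)) * Sd))"]) simp
  qed
  define L where "L = min (\<epsilon> * exp (- (A * b\<^sup>2))) (\<Psi> 0)"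
  have Lpos: "L > 0" unfolding L_def \<Psi>_def using epspos Upos[of 0] by simp
  have lowPsi: "\<Psi> t \<ge> L" if t0: "t \<ge> 0" for t
  proof (rule ccontr)
    assume nt: "\<not> L \<le> \<Psi> t"
    define T where "T = {0..t} \<inter> \<Psi> -` {L..}"
    have subt: "{0..t} \<subseteq> {0..}" by auto
    have clT: "closed T" unfolding T_def
      by (rule continuous_closed_preimage[OF continuous_on_subset[OF contPsi subt]]) auto
    have T0: "0 \<in> T" using t0 by (simp add: T_def L_def)
    then have Tne: "T \<noteq> {}" by auto
    have bddT: "bdd_above T" unfolding T_def by (rule bdd_aboveI[of _ t]) auto
    define s where "s = Sup T"
    have sT: "s \<in> T" unfolding s_def using closed_contains_Sup[OF Tne bddT clT] .
    then have s0: "0 \<le> s" "s \<le> t" "L \<le> \<Psi> s" by (auto simp: T_def)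
    have st: "s < t" using s0 nt by (cases "s = t") auto
    have after: "\<Psi> \<tau> < L" if "s < \<tau>" "\<tau> \<le> t" for \<tau>
    proof (rule ccontr)
      assume "\<not> \<Psi> \<tau> < L"
      then have "\<tau> \<in> T" using that s0 by (auto simp: T_def)
      then have "\<tau> \<le> s" unfolding s_def by (rule cSup_upper[OF _ bddT])
      then show False using that by simp
    qed
    have "\<Psi> s \<le> \<Psi> t"
    proof (rule DERIV_nonneg_imp_increasing_open[of s t \<Psi>])
      show "s \<le> t" using st by simp
      show "continuous_on {s..t} \<Psi>" by (rule continuous_on_subset[OF contPsi]) (use s0 in auto)
      show "\<exists>y. (\<Psi> has_real_derivative y) (at \<tau>) \<and> 0 \<le> y" if "s < \<tau>" "\<tau> < t" for \<tau>
      proof (rule dPsi)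
        show "\<tau> > 0" using that s0 by simp
        have "\<Psi> \<tau> < L" using after that by simp
        then have "U \<tau> * exp (- (A * b\<^sup>2)) < \<epsilon> * exp (- (A * b\<^sup>2))"
        proof -
          have "L \<le> \<epsilon> * exp (- (A * b\<^sup>2))" unfolding L_def by simp
          moreover have "U \<tau> * exp (- (A * b\<^sup>2)) \<le> \<Psi> \<tau>" using U_le_Psi[of \<tau>] that s0 by simp
          ultimately show ?thesis using \<open>\<Psi> \<tau> < L\<close> by linarith
        qed
        then show "U \<tau> < \<epsilon>" by simp
      qed
    qed
    then show False using after[of t] st s0 by simp
  qed
  obtain tn :: "nat \<Rightarrow> real" where tn: "filterlim tn at_top sequentially"
    "(\<lambda>n. x (tn n)) \<longlonglongrightarrow> (\<mu> * N\<^sup>2 / (p + \<mu> * N), 0, 0)"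
    using om unfolding omega_limit_def by blast
  have "(\<lambda>n. fst (snd (x (tn n)))) \<longlonglongrightarrow> 0" using tendsto_fst[OF tendsto_snd[OF tn(2)]] by simp
  moreover have "(\<lambda>n. snd (snd (x (tn n)))) \<longlonglongrightarrow> 0" using tendsto_snd[OF tendsto_snd[OF tn(2)]] by simp
  ultimately have "(\<lambda>n. E (tn n) + w * I (tn n)) \<longlonglongrightarrow> 0 + w * 0"
    unfolding E_def I_def by (intro tendsto_intros)
  then have Ulim: "(\<lambda>n. U (tn n)) \<longlonglongrightarrow> 0" by (simp add: U_def)
  have "\<forall>\<^sub>F n in sequentially. 0 \<le> tn n" using tn(1) by (simp add: filterlim_at_top)
  then have "\<forall>\<^sub>F n in sequentially. L \<le> U (tn n)"
    by eventually_elim (use lowPsi Psi_le_U in fastforce)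
  then have "L \<le> 0" using tendsto_lowerbound[OF Ulim] by simp
  then show False using Lpos by simp
qed

end
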